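(* Let $m\ge 1$ and $A=(a_0,\ldots,a_m)$ real with $a_0,a_m\neq0$. If $w$ is a nonzero complex number with $P_A(w)=P_A(w^{-1})=0$, then $T_{n,A}\!\left(\tfrac12(w+w^{-1})\right)=0$ for all $n\ge m$.
   Context: $T_k$ denotes the Chebyshev polynomial of the first kind, $T_k(\cos\theta)=\cos k\theta$. For $A=(a_0,\ldots,a_m)$ real with $a_0,a_m\ne0$ and $n\ge m$, $T_{n,A}(x)=\sum_{i=0}^m a_iT_{n-i}(x)$ and $P_A(x)=\sum_{i=0}^m a_ix^{m-i}$. *)

theory Defs
  imports "HOL-Analysis.Analysis"
begin

fun cheb_T :: "nat \<Rightarrow> 'a::comm_ring_1 \<Rightarrow> 'a" where
  "cheb_T 0 x = 1"
| "cheb_T (Suc 0) x = x"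
| "cheb_T (Suc (Suc k)) x = 2 * x * cheb_T (Suc k) x - cheb_T k x"

text \<open>A = (a_0,...,a_m) is represented by a function a with indices 0..m.
  T_{n,A}(x) = sum_{i=0}^m a_i T_{n-i}(x), with real coefficients embedded.\<close>
definition T_nA :: "nat \<Rightarrow> nat \<Rightarrow> (nat \<Rightarrow> real) \<Rightarrow> complex \<Rightarrow> complex" where
  "T_nA n m a x = (\<Sum>i=0..m. of_real (a i) * cheb_T (n - i) x)"

definition P_A :: "nat \<Rightarrow> (nat \<Rightarrow> real) \<Rightarrow> complex \<Rightarrow> complex" where
  "P_A m a x = (\<Sum>i=0..m. of_real (a i) * x ^ (m - i))"

end

theory Submission
  imports Defs
begin

lemma cheb_w:
  fixes w :: complex
  assumes "w \<noteq> 0"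
  shows "cheb_T k ((w + inverse w) / 2) = (w ^ k + inverse w ^ k) / 2"
proof (induction k rule: less_induct)
  case (less k)
  show ?case
  proof (cases k)
    case 0 then show ?thesis by simp
  next
    case (Suc j)
    show ?thesis
    proof (cases j)
      case 0 then show ?thesis using Suc by simp
    next
      case (Suc i)
      have wz: "w * inverse w = 1" using assms by simp
      have h1: "cheb_T (Suc i) ((w + inverse w) / 2) = (w ^ Suc i + inverse w ^ Suc i) / 2"
        using less Suc \<open>k = Suc j\<close> by simp
      have h2: "cheb_T i ((w + inverse w) / 2) = (w ^ i + inverse w ^ i) / 2"
        using less Suc \<open>k = Suc j\<close> by simp
      have e1: "w * inverse w ^ Suc i = inverse w ^ i" using wz by (simp add: mult.assoc[symmetric])
      have e2: "inverse w * w ^ Suc i = w ^ i" using wz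
        by (simp add: mult.assoc[symmetric] mult.commute)
      have "cheb_T k ((w + inverse w) / 2) =
        2 * ((w + inverse w) / 2) * ((w ^ Suc i + inverse w ^ Suc i) / 2) - (w ^ i + inverse w ^ i) / 2"
        using Suc \<open>k = Suc j\<close> by (simp only: cheb_T.simps h1 h2)
      also have "\<dots> = (w * w ^ Suc i + inverse w * inverse w ^ Suc i + w * inverse w ^ Suc i
          + inverse w * w ^ Suc i - w ^ i - inverse w ^ i) / 2"
        by (simp add: field_simps)
      also have "\<dots> = (w ^ Suc (Suc i) + inverse w ^ Suc (Suc i) + inverse w ^ i
          + w ^ i - w ^ i - inverse w ^ i) / 2"
        by (simp only: e1 e2 power_Suc[symmetric])
      also have "\<dots> = (w ^ k + inverse w ^ k) / 2"
        using Suc \<open>k = Suc j\<close> by simp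
      finally show ?thesis .
    qed
  qed
qed

theorem corollary2p2:
  fixes m :: nat and a :: "nat \<Rightarrow> real" and w :: complex
  assumes "m \<ge> 1" and "a 0 \<noteq> 0" and "a m \<noteq> 0"
    and "w \<noteq> 0" and "P_A m a w = 0" and "P_A m a (inverse w) = 0"
  shows "\<forall>n\<ge>m. T_nA n m a ((w + inverse w) / 2) = 0"
proof (intro allI impI)
  fix n assume nm: "n \<ge> m"
  have "T_nA n m a ((w + inverse w) / 2)
      = (\<Sum>i=0..m. of_real (a i) * ((w ^ (n - i) + inverse w ^ (n - i)) / 2))"
    unfolding T_nA_def cheb_w[OF assms(4)] ..
  also have "\<dots> = (\<Sum>i=0..m. (w ^ (n - m) / 2) * (of_real (a i) * w ^ (m - i))
        + (inverse w ^ (n - m) / 2) * (of_real (a i) * inverse w ^ (m - i)))"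
  proof (rule sum.cong[OF refl])
    fix i assume "i \<in> {0..m}"
    then have "n - i = (n - m) + (m - i)" using nm by auto
    then show "of_real (a i) * ((w ^ (n - i) + inverse w ^ (n - i)) / 2) =
      (w ^ (n - m) / 2) * (of_real (a i) * w ^ (m - i))
        + (inverse w ^ (n - m) / 2) * (of_real (a i) * inverse w ^ (m - i))"
      by (simp add: power_add field_simps)
  qed
  also have "\<dots> = (w ^ (n - m) / 2) * P_A m a w + (inverse w ^ (n - m) / 2) * P_A m a (inverse w)"
    unfolding P_A_def by (simp add: sum.distrib sum_distrib_left)
  also have "\<dots> = 0" using assms by simp
  finally show "T_nA n m a ((w + inverse w) / 2) = 0" .
qed

end
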